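(* Let $\alpha_a$ be a labeled dGL hybrid game and $\varphi$ a formula, and let $M$ be the model predictive Angelic subvalue map for $\alpha_a$ and $\varphi$. Then $\models\langle\mathcal{P}(\alpha_a,M)\rangle\varphi\leftrightarrow\langle\alpha\rangle\varphi$. Dually, if $M'$ is the model predictive Demonic subvalue map for $\alpha_a$ and $\varphi$, then $\models[\mathcal{D}(\alpha_a,M')]\varphi\leftrightarrow[\alpha]\varphi$.
   Context: Differential game logic (dGL). Hybrid games are generated by $\alpha,\beta ::= x:=e \mid \alpha;\beta \mid ?Q \mid \{x'=f(x)\,\&\,Q\} \mid \alpha^{*} \mid \alpha\cup\beta \mid x:=* \mid\ !Q \mid \{x'=f(x)\,\&\,Q\}^{d} \mid \alpha^{\times} \mid \alpha\cap\beta \mid x:=\otimes$, with $x$ a real variable (vector for ODEs), $e,f(x)$ polynomial terms, $Q$ a formula. Players Angel and Demon: $x:=e$ deterministic assignment; in $x:=*$ Angel (in $x:=\otimes$ Demon) assigns any real; in $\{x'=f(x)\&Q\}$ Angel (in $\{\cdot\}^d$ Demon) chooses a duration $r\ge 0$ of following the ODE with $Q$ true throughout; $?Q$ makes Angel lose and $!Q$ makes Demon lose if $Q$ is false; in $\alpha\cup\beta$ Angel (in $\alpha\cap\beta$ Demon) chooses the branch; in $\alpha^*$ Angel (in $\alpha^\times$ Demon) decides before each iteration whether to repeat or stop; $\alpha;\beta$ sequential. Formulas: polynomial (in)equalities closed under connectives, real quantifiers, and modalities $\langle\alpha\rangle\varphi$ (Angel can win $\alpha$ reaching $\varphi$) and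 $[\alpha]\varphi\equiv\neg\langle\alpha\rangle\neg\varphi$, with the standard dGL winning-region semantics ($\langle x:=*\rangle\varphi\leftrightarrow\exists x\varphi$, $\langle x:=\otimes\rangle\varphi\leftrightarrow\forall x\varphi$, $\langle ?Q\rangle\varphi\leftrightarrow Q\wedge\varphi$, $\langle !Q\rangle\varphi\leftrightarrow(Q\rightarrow\varphi)$, $\cup$ as disjunction, $\cap$ as conjunction, $\langle\alpha;\beta\rangle\varphi\leftrightarrow\langle\alpha\rangle\langle\beta\rangle\varphi$, Angel ODE existential, Demon ODE universal, $\langle\alpha^*\rangle$ least and $\langle\alpha^\times\rangle$ greatest fixed point). $\models$ denotes validity. Labels: every node of the syntax tree carries a unique label; $\alpha_a$ has root label $a$; $\mathrm{nodes}(\alpha_a)$ is its set of subgame labels; $\mathsf{end}$ is a special extra label. A map $S$ assigns formulas to a label set containing $\mathrm{nodes}(\alpha_a)\cup\{\mathsf{end}\}$; $S\{\mathsf{end}\mapsto Q\}$ replaces the value at $\mathsf{end}$. $\gamma_g,\delta_d$ denote immediate subgames with root labels $g,d$. Game suffix: $\mathrm{suffix}_a(\alpha_a)=\alpha_a$; for $b\ne a$: for loops $((\gamma_g)^* )_a,((\gamma_g)^\times)_a$ it is $\mathrm{suffix}_b(\gamma_g);\alpha_a$; for $\cup,\cap$ the suffix within the branch containing $b$; for $(\gamma_g;\delta_d)_a$ it is $\mathrm{suffix}_b(\gamma_g);\delta_d$ if $b\in\mathrm{nodes}(\gamma_g)$ else $\mathrm{suffix}_b(\delta_d)$. Model predictive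 Angelic subvalue map for $\alpha_a$ and $\varphi$: $M(\mathsf{end})=\varphi$ and $M(b)=\langle\mathrm{suffix}_b(\alpha_a)\rangle\varphi$ for $b\in\mathrm{nodes}(\alpha_a)$. Model predictive Demonic subvalue map: $M'(\mathsf{end})=\varphi$ and $M'(b)=[\mathrm{suffix}_b(\alpha_a)]\varphi$. Angelic existential projection $\mathcal{P}(\alpha_a,S)$: $(x:=* )_a\mapsto(x:=* )_a;?S(\mathsf{end})$; Angel ODE $\mapsto$ ODE$;?S(\mathsf{end})$; $(\gamma_g\cup\delta_d)_a\mapsto(?S(g);\mathcal{P}(\gamma_g,S))\cup(?S(d);\mathcal{P}(\delta_d,S))$; $((\gamma_g)^* )_a\mapsto(?S(g);\mathcal{P}(\gamma_g,S\{\mathsf{end}\mapsto S(a)\}))^*;?S(\mathsf{end})$; $(\gamma_g;\delta_d)_a\mapsto\mathcal{P}(\gamma_g,S\{\mathsf{end}\mapsto S(d)\});\mathcal{P}(\delta_d,S)$; $\cap\mapsto\mathcal{P}(\gamma_g,S)\cap\mathcal{P}(\delta_d,S)$; $((\gamma_g)^\times)_a\mapsto\mathcal{P}(\gamma_g,S\{\mathsf{end}\mapsto S(a)\})^\times$; $x:=e,x:=\otimes,?Q,!Q$, Demon ODE unchanged (labels preserved, new nodes fresh labels). Demonic existential projection $\mathcal{D}(\alpha_a,S)$: $(x:=\otimes)_a\mapsto(x:=\otimes)_a;!S(\mathsf{end})$; Demon ODE $\mapsto$ ODE$^d;!S(\mathsf{end})$; $(\gamma_g\cap\delta_d)_a\mapsto(!S(g);\mathcal{D}(\gamma_g,S))\cap(!S(d);\mathcal{D}(\delta_d,S))$;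 $((\gamma_g)^\times)_a\mapsto(!S(g);\mathcal{D}(\gamma_g,S\{\mathsf{end}\mapsto S(g)\vee S(\mathsf{end})\}))^\times;!S(\mathsf{end})$; $(\gamma_g;\delta_d)_a\mapsto\mathcal{D}(\gamma_g,S\{\mathsf{end}\mapsto S(d)\});\mathcal{D}(\delta_d,S)$; $\cup\mapsto\mathcal{D}(\gamma_g,S)\cup\mathcal{D}(\delta_d,S)$; $((\gamma_g)^* )_a\mapsto\mathcal{D}(\gamma_g,S\{\mathsf{end}\mapsto S(a)\})^*$; $x:=e,x:=*,?Q,!Q$, Angel ODE unchanged. *)

theory Defs
  imports "HOL-Analysis.Analysis"
begin

type_synonym var = nat
type_synonym lab = nat
type_synonym state = "var \<Rightarrow> real"

datatype trm = Var var | Const real | Plus trm trm | Times trm trm | Neg trm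

datatype fml =
    Geq trm trm | Gt trm trm | Equal trm trm
  | Not fml | And fml fml | Or fml fml | Imp fml fml | Iff fml fml
  | Exists var fml | Forall var fml
  | Dia game fml
and game =
    Assign lab var trm
  | AssignAny lab var
  | Test lab fml
  | ODE lab "(var \<times> trm) list" fml
  | Choice lab game game
  | Seq lab game game
  | Loop lab game
  | AssignDemon lab var
  | Assert lab fml
  | DODE lab "(var \<times> trm) list" fml
  | DChoice lab game game
  | DLoop lab game

definition Box :: "game \<Rightarrow> fml \<Rightarrow> fml" where
  "Box a p = Not (Dia a (Not p))"

primrec trm_sem :: "trm \<Rightarrow> state \<Rightarrow> real" where
  "trm_sem (Var x) \<omega> = \<omega> x"
| "trm_sem (Const c) \<omega> = c"
| "trm_sem (Plus e1 e2) \<omega> = trm_sem e1 \<omega> + trm_sem e2 \<omega>"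
| "trm_sem (Times e1 e2) \<omega> = trm_sem e1 \<omega> * trm_sem e2 \<omega>"
| "trm_sem (Neg e) \<omega> = - trm_sem e \<omega>"

definition sol :: "(var \<times> trm) list \<Rightarrow> state set \<Rightarrow> state \<Rightarrow> real \<Rightarrow> (real \<Rightarrow> state) \<Rightarrow> bool" where
  "sol xs Q \<omega> r \<phi> \<longleftrightarrow> r \<ge> 0 \<and> \<phi> 0 = \<omega> \<and>
     (\<forall>t\<in>{0..r}. \<phi> t \<in> Q
        \<and> (\<forall>y. y \<notin> fst ` set xs \<longrightarrow> \<phi> t y = \<omega> y)
        \<and> (\<forall>(x,e)\<in>set xs. ((\<lambda>s. \<phi> s x) has_real_derivative trm_sem e (\<phi> t)) (at t within {0..r})))"

text \<open>Formula semantics and winding-region semantics of games: \<open>game_sem a X\<close> is the set of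
  states from which Angel has a winning strategy in \<open>a\<close> to reach \<open>X\<close>.\<close>
primrec fml_sem :: "fml \<Rightarrow> state set" and game_sem :: "game \<Rightarrow> state set \<Rightarrow> state set" where
  "fml_sem (Geq e1 e2) = {\<omega>. trm_sem e1 \<omega> \<ge> trm_sem e2 \<omega>}"
| "fml_sem (Gt e1 e2) = {\<omega>. trm_sem e1 \<omega> > trm_sem e2 \<omega>}"
| "fml_sem (Equal e1 e2) = {\<omega>. trm_sem e1 \<omega> = trm_sem e2 \<omega>}"
| "fml_sem (Not p) = - fml_sem p"
| "fml_sem (And p q) = fml_sem p \<inter> fml_sem q"
| "fml_sem (Or p q) = fml_sem p \<union> fml_sem q"
| "fml_sem (Imp p q) = - fml_sem p \<union> fml_sem q"
| "fml_sem (Iff p q) = {\<omega>. \<omega> \<in> fml_sem p \<longleftrightarrow> \<omega> \<in> fml_sem q}"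
| "fml_sem (Exists x p) = {\<omega>. \<exists>r. fun_upd \<omega> x r \<in> fml_sem p}"
| "fml_sem (Forall x p) = {\<omega>. \<forall>r. fun_upd \<omega> x r \<in> fml_sem p}"
| "fml_sem (Dia a p) = game_sem a (fml_sem p)"
| "game_sem (Assign l x e) X = {\<omega>. fun_upd \<omega> x (trm_sem e \<omega>) \<in> X}"
| "game_sem (AssignAny l x) X = {\<omega>. \<exists>r. fun_upd \<omega> x r \<in> X}"
| "game_sem (Test l q) X = fml_sem q \<inter> X"
| "game_sem (ODE l xs q) X = {\<omega>. \<exists>r \<phi>. sol xs (fml_sem q) \<omega> r \<phi> \<and> \<phi> r \<in> X}"
| "game_sem (Choice l a b) X = game_sem a X \<union> game_sem b X"
| "game_sem (Seq l a b) X = game_sem a (game_sem b X)"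
| "game_sem (Loop l a) X = lfp (\<lambda>Z. X \<union> game_sem a Z)"
| "game_sem (AssignDemon l x) X = {\<omega>. \<forall>r. fun_upd \<omega> x r \<in> X}"
| "game_sem (Assert l q) X = - fml_sem q \<union> X"
| "game_sem (DODE l xs q) X = {\<omega>. \<forall>r \<phi>. sol xs (fml_sem q) \<omega> r \<phi> \<longrightarrow> \<phi> r \<in> X}"
| "game_sem (DChoice l a b) X = game_sem a X \<inter> game_sem b X"
| "game_sem (DLoop l a) X = gfp (\<lambda>Z. X \<inter> game_sem a Z)"

definition valid :: "fml \<Rightarrow> bool" where
  "valid p \<longleftrightarrow> fml_sem p = UNIV"

datatype lbl = L lab | End

primrec root :: "game \<Rightarrow> lab" where
  "root (Assign l x e) = l" | "root (AssignAny l x) = l" | "root (Test l q) = l"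
| "root (ODE l xs q) = l" | "root (Choice l a b) = l" | "root (Seq l a b) = l"
| "root (Loop l a) = l" | "root (AssignDemon l x) = l" | "root (Assert l q) = l"
| "root (DODE l xs q) = l" | "root (DChoice l a b) = l" | "root (DLoop l a) = l"

text \<open>Labels of all subgame nodes of the game syntax tree (as a list, to express uniqueness).\<close>
primrec nodes :: "game \<Rightarrow> lab list" where
  "nodes (Assign l x e) = [l]" | "nodes (AssignAny l x) = [l]" | "nodes (Test l q) = [l]"
| "nodes (ODE l xs q) = [l]" | "nodes (Choice l a b) = l # nodes a @ nodes b"
| "nodes (Seq l a b) = l # nodes a @ nodes b"
| "nodes (Loop l a) = l # nodes a" | "nodes (AssignDemon l x) = [l]" | "nodes (Assert l q) = [l]"
| "nodes (DODE l xs q) = [l]" | "nodes (DChoice l a b) = l # nodes a @ nodes b"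
| "nodes (DLoop l a) = l # nodes a"

text \<open>Game suffix \<open>suffix b a\<close> (meaningful for \<open>b \<in> nodes a\<close>). The labels of the new sequential
  composition nodes it creates are irrelevant (suffixes only occur inside formulas); we reuse
  the root label.\<close>
primrec suffix :: "lab \<Rightarrow> game \<Rightarrow> game" where
  "suffix b (Assign l x e) = Assign l x e"
| "suffix b (AssignAny l x) = AssignAny l x"
| "suffix b (Test l q) = Test l q"
| "suffix b (ODE l xs q) = ODE l xs q"
| "suffix b (Choice l g d) = (if b = l then Choice l g d
     else if b \<in> set (nodes g) then suffix b g else suffix b d)"
| "suffix b (Seq l g d) = (if b = l then Seq l g d
     else if b \<in> set (nodes g) then Seq l (suffix b g) d else suffix b d)"
| "suffix b (Loop l g) = (if b = l then Loop l g else Seq l (suffix b g) (Loop l g))"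
| "suffix b (AssignDemon l x) = AssignDemon l x"
| "suffix b (Assert l q) = Assert l q"
| "suffix b (DODE l xs q) = DODE l xs q"
| "suffix b (DChoice l g d) = (if b = l then DChoice l g d
     else if b \<in> set (nodes g) then suffix b g else suffix b d)"
| "suffix b (DLoop l g) = (if b = l then DLoop l g else Seq l (suffix b g) (DLoop l g))"

fun angel_mp :: "game \<Rightarrow> fml \<Rightarrow> lbl \<Rightarrow> fml" where
  "angel_mp a p End = p"
| "angel_mp a p (L b) = Dia (suffix b a) p"

fun demon_mp :: "game \<Rightarrow> fml \<Rightarrow> lbl \<Rightarrow> fml" where
  "demon_mp a p End = p"
| "demon_mp a p (L b) = Box (suffix b a) p"

text \<open>\<open>nl a k\<close> provides the (fresh) label of the \<open>k\<close>-th new node created when projecting the node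
  labeled \<open>a\<close>; original labels are preserved.\<close>
primrec aproj :: "(lab \<Rightarrow> nat \<Rightarrow> lab) \<Rightarrow> game \<Rightarrow> (lbl \<Rightarrow> fml) \<Rightarrow> game" where
  "aproj nl (Assign l x e) S = Assign l x e"
| "aproj nl (AssignAny l x) S = Seq (nl l 0) (AssignAny l x) (Test (nl l 1) (S End))"
| "aproj nl (Test l q) S = Test l q"
| "aproj nl (ODE l xs q) S = Seq (nl l 0) (ODE l xs q) (Test (nl l 1) (S End))"
| "aproj nl (Choice l g d) S =
     Choice l (Seq (nl l 0) (Test (nl l 1) (S (L (root g)))) (aproj nl g S))
              (Seq (nl l 2) (Test (nl l 3) (S (L (root d)))) (aproj nl d S))"
| "aproj nl (Seq l g d) S = Seq l (aproj nl g (S(End := S (L (root d))))) (aproj nl d S)"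
| "aproj nl (Loop l g) S =
     Seq (nl l 0)
       (Loop l (Seq (nl l 1) (Test (nl l 2) (S (L (root g)))) (aproj nl g (S(End := S (L l))))))
       (Test (nl l 3) (S End))"
| "aproj nl (AssignDemon l x) S = AssignDemon l x"
| "aproj nl (Assert l q) S = Assert l q"
| "aproj nl (DODE l xs q) S = DODE l xs q"
| "aproj nl (DChoice l g d) S = DChoice l (aproj nl g S) (aproj nl d S)"
| "aproj nl (DLoop l g) S = DLoop l (aproj nl g (S(End := S (L l))))"

primrec dproj :: "(lab \<Rightarrow> nat \<Rightarrow> lab) \<Rightarrow> game \<Rightarrow> (lbl \<Rightarrow> fml) \<Rightarrow> game" where
  "dproj nl (Assign l x e) S = Assign l x e"
| "dproj nl (AssignAny l x) S = AssignAny l x"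
| "dproj nl (Test l q) S = Test l q"
| "dproj nl (ODE l xs q) S = ODE l xs q"
| "dproj nl (Choice l g d) S = Choice l (dproj nl g S) (dproj nl d S)"
| "dproj nl (Seq l g d) S = Seq l (dproj nl g (S(End := S (L (root d))))) (dproj nl d S)"
| "dproj nl (Loop l g) S = Loop l (dproj nl g (S(End := S (L l))))"
| "dproj nl (AssignDemon l x) S = Seq (nl l 0) (AssignDemon l x) (Assert (nl l 1) (S End))"
| "dproj nl (Assert l q) S = Assert l q"
| "dproj nl (DODE l xs q) S = Seq (nl l 0) (DODE l xs q) (Assert (nl l 1) (S End))"
| "dproj nl (DChoice l g d) S =
     DChoice l (Seq (nl l 0) (Assert (nl l 1) (S (L (root g)))) (dproj nl g S))
               (Seq (nl l 2) (Assert (nl l 3) (S (L (root d)))) (dproj nl d S))"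
| "dproj nl (DLoop l g) S =
     Seq (nl l 0)
       (DLoop l (Seq (nl l 1) (Assert (nl l 2) (S (L (root g))))
                    (dproj nl g (S(End := Or (S (L (root g))) (S End))))))
       (Assert (nl l 3) (S End))"

end

theory Submission
  imports Defs
begin

lemma mono_gs: "X \<subseteq> Y \<Longrightarrow> game_sem a X \<subseteq> game_sem a Y"
proof (induction a arbitrary: X Y rule: game.induct[of "\<lambda>_. True"])
  case (Loop l g) then show ?case by simp (rule lfp_mono, blast)
next
  case (DLoop l g) then show ?case by simp (rule gfp_mono, blast)
qed (simp; blast)+

lemma mono_gsf: "mono (game_sem a)" using mono_gs by (meson monoI)

lemma root_in: "root g \<in> set (nodes g)" by (cases g) auto
lemma suffix_root: "suffix (root g) g = g" by (cases g) auto

definition agreeA where "agreeA g S \<longleftrightarrow> (\<forall>b\<in>set (nodes g). fml_sem (S (L b)) = game_sem (suffix b g) (fml_sem (S End)))"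
definition agreeD where "agreeD g S \<longleftrightarrow> (\<forall>b\<in>set (nodes g). fml_sem (S (L b)) = - game_sem (suffix b g) (- fml_sem (S End)))"

lemma projB: "game_sem (aproj nl g S) Y \<subseteq> game_sem g Y"
proof (induction g arbitrary: S Y rule: game.induct[of "\<lambda>_. True"])
  case (Seq l g d) then show ?case
    by simp (meson mono_gs order_trans)
next
  case (Loop l g) then show ?case
    by simp (rule order_trans[OF _ lfp_mono], rule lfp_mono, blast, blast)
next
  case (DLoop l g) then show ?case by simp (rule gfp_mono, blast)
qed (simp; blast)+

lemma projA: "distinct (nodes g) \<Longrightarrow> agreeA g S \<Longrightarrow>
  game_sem g (Y \<inter> fml_sem (S End)) \<subseteq> game_sem (aproj nl g S) Y"
proof (induction g arbitrary: S Y rule: game.induct[of "\<lambda>_. True"])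
  case (Choice l g d)
  have ag: "agreeA g S" using Choice.prems by (auto simp: agreeA_def)
  have ad: "agreeA d S" using Choice.prems by (auto simp: agreeA_def)
  have hg: "fml_sem (S (L (root g))) = game_sem g (fml_sem (S End))"
    using Choice.prems root_in[of g] by (auto simp: agreeA_def suffix_root)
  have hd: "fml_sem (S (L (root d))) = game_sem d (fml_sem (S End))"
    using Choice.prems root_in[of d] by (auto simp: agreeA_def suffix_root)
  have "game_sem g (Y \<inter> fml_sem (S End)) \<subseteq> game_sem g (fml_sem (S End))" by (rule mono_gs) auto
  moreover have "game_sem d (Y \<inter> fml_sem (S End)) \<subseteq> game_sem d (fml_sem (S End))" by (rule mono_gs) auto
  ultimately show ?case using Choice.IH(1)[OF _ ag, of Y] Choice.IH(2)[OF _ ad, of Y] Choice.prems hg hd by auto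
next
  case (Seq l g d)
  let ?S = "S(End := S (L (root d)))"
  have hd: "fml_sem (S (L (root d))) = game_sem d (fml_sem (S End))"
    using Seq.prems root_in[of d] by (auto simp: agreeA_def suffix_root)
  have ag: "agreeA g ?S" using Seq.prems hd by (auto simp: agreeA_def)
  have ad: "agreeA d S" using Seq.prems by (auto simp: agreeA_def)
  have "game_sem d (Y \<inter> fml_sem (S End)) \<subseteq> game_sem d (fml_sem (S End))" by (rule mono_gs) auto
  then have "game_sem d (Y \<inter> fml_sem (S End)) \<subseteq> game_sem (aproj nl d S) Y \<inter> fml_sem (?S End)"
    using Seq.IH(2)[OF _ ad, of Y] Seq.prems hd by auto
  then have "game_sem g (game_sem d (Y \<inter> fml_sem (S End))) \<subseteq> game_sem g (game_sem (aproj nl d S) Y \<inter> fml_sem (?S End))"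
    by (rule mono_gs)
  also have "\<dots> \<subseteq> game_sem (aproj nl g ?S) (game_sem (aproj nl d S) Y)"
    by (rule Seq.IH(1)[OF _ ag]) (use Seq.prems in simp)
  finally show ?case by simp
next
  case (Loop l g)
  let ?E = "fml_sem (S End)"
  let ?S = "S(End := S (L l))"
  let ?W = "game_sem (Loop l g) ?E"
  have hW: "fml_sem (S (L l)) = ?W" using Loop.prems by (auto simp: agreeA_def)
  have ag: "agreeA g ?S" using Loop.prems hW by (auto simp: agreeA_def)
  have hg: "fml_sem (S (L (root g))) = game_sem g ?W"
    using Loop.prems root_in[of g] by (auto simp: agreeA_def suffix_root)
  have IH: "\<And>Y. game_sem g (Y \<inter> ?W) \<subseteq> game_sem (aproj nl g ?S) Y"
  proof -
    fix Y
    have e: "fml_sem (?S End) = ?W" using hW by simp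
    have dg: "distinct (nodes g)" using Loop.prems by simp
    show "game_sem g (Y \<inter> ?W) \<subseteq> game_sem (aproj nl g ?S) Y"
      using Loop.IH[OF dg ag, of Y] unfolding e .
  qed
  define B where "B = Seq (nl l 1) (Test (nl l 2) (S (L (root g)))) (aproj nl g ?S)"
  define Lf where "Lf = lfp (\<lambda>Z. (?E \<inter> Y) \<union> game_sem B Z)"
  have mL: "mono (\<lambda>Z. (?E \<inter> Y) \<union> game_sem B Z)" using mono_gs by (intro monoI) blast
  have Lunf: "Lf = (?E \<inter> Y) \<union> game_sem B Lf" unfolding Lf_def using lfp_unfold[OF mL] .
  have mK: "mono (\<lambda>Z. (Y \<inter> ?E) \<union> game_sem g Z)" using mono_gs by (intro monoI) blast
  have KW: "lfp (\<lambda>Z. (Y \<inter> ?E) \<union> game_sem g Z) \<subseteq> ?W" by simp (rule lfp_mono, blast)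
  have "lfp (\<lambda>Z. (Y \<inter> ?E) \<union> game_sem g Z) \<subseteq> Lf"
  proof (rule lfp_induct[OF mK])
    have "game_sem g (lfp (\<lambda>Z. (Y \<inter> ?E) \<union> game_sem g Z) \<inter> Lf) \<subseteq> game_sem g (Lf \<inter> ?W)"
      using KW by (intro mono_gs) blast
    moreover have "game_sem g (lfp (\<lambda>Z. (Y \<inter> ?E) \<union> game_sem g Z) \<inter> Lf) \<subseteq> game_sem g ?W"
      using KW by (intro mono_gs) blast
    ultimately have "game_sem g (lfp (\<lambda>Z. (Y \<inter> ?E) \<union> game_sem g Z) \<inter> Lf) \<subseteq> game_sem B Lf"
      using IH[of Lf] hg by (auto simp: B_def)
    then show "Y \<inter> ?E \<union> game_sem g (lfp (\<lambda>Z. (Y \<inter> ?E) \<union> game_sem g Z) \<inter> Lf) \<subseteq> Lf"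
      using Lunf by blast
  qed
  then show ?case by (simp add: Lf_def B_def)
next
  case (DChoice l g d)
  have ag: "agreeA g S" using DChoice.prems by (auto simp: agreeA_def)
  have ad: "agreeA d S" using DChoice.prems by (auto simp: agreeA_def)
  show ?case using DChoice.IH(1)[OF _ ag, of Y] DChoice.IH(2)[OF _ ad, of Y] DChoice.prems by auto
next
  case (DLoop l g)
  let ?E = "fml_sem (S End)"
  let ?S = "S(End := S (L l))"
  let ?W = "game_sem (DLoop l g) ?E"
  have hW: "fml_sem (S (L l)) = ?W" using DLoop.prems by (auto simp: agreeA_def)
  have ag: "agreeA g ?S" using DLoop.prems hW by (auto simp: agreeA_def)
  have IH: "\<And>Y. game_sem g (Y \<inter> ?W) \<subseteq> game_sem (aproj nl g ?S) Y"
  proof -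
    fix Y
    have e: "fml_sem (?S End) = ?W" using hW by simp
    have dg: "distinct (nodes g)" using DLoop.prems by simp
    show "game_sem g (Y \<inter> ?W) \<subseteq> game_sem (aproj nl g ?S) Y"
      using DLoop.IH[OF dg ag, of Y] unfolding e .
  qed
  define G where "G = gfp (\<lambda>Z. (Y \<inter> ?E) \<inter> game_sem g Z)"
  have mG: "mono (\<lambda>Z. (Y \<inter> ?E) \<inter> game_sem g Z)" using mono_gs by (intro monoI) blast
  have Gunf: "G = (Y \<inter> ?E) \<inter> game_sem g G" unfolding G_def using gfp_unfold[OF mG] .
  have GW: "G \<subseteq> ?W" unfolding G_def by simp (rule gfp_mono, blast)
  have "game_sem g G \<subseteq> game_sem (aproj nl g ?S) G" using IH[of G] GW
    by (metis Int_absorb2)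
  then have "G \<subseteq> gfp (\<lambda>Z. Y \<inter> game_sem (aproj nl g ?S) Z)"
    by (intro gfp_upperbound) (use Gunf in blast)
  then show ?case by (simp add: G_def)
next
  case (AssignAny l x) then show ?case by auto
next
  case (ODE l xs q) then show ?case by auto
qed (auto intro: mono_gs)

lemma projBD: "game_sem g Y \<subseteq> game_sem (dproj nl g S) Y"
proof (induction g arbitrary: S Y rule: game.induct[of "\<lambda>_. True"])
  case (Seq l g d) then show ?case
    by simp (meson mono_gs order_trans)
next
  case (Loop l g) then show ?case
    by simp (rule lfp_mono, blast)
next
  case (DLoop l g) then show ?case
    by simp (rule order_trans[OF _ gfp_mono], rule gfp_mono, blast, blast)
qed (simp; blast)+

lemma projAD: "distinct (nodes g) \<Longrightarrow> agreeD g S \<Longrightarrow>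
  game_sem (dproj nl g S) Y \<subseteq> game_sem g (Y \<union> - fml_sem (S End))"
proof (induction g arbitrary: S Y rule: game.induct[of "\<lambda>_. True"])
  case (Choice l g d)
  have ag: "agreeD g S" using Choice.prems by (auto simp: agreeD_def)
  have ad: "agreeD d S" using Choice.prems by (auto simp: agreeD_def)
  show ?case using Choice.IH(1)[OF _ ag, of Y] Choice.IH(2)[OF _ ad, of Y] Choice.prems by auto
next
  case (Seq l g d)
  let ?N = "- fml_sem (S End)"
  let ?S = "S(End := S (L (root d)))"
  have hd: "fml_sem (S (L (root d))) = - game_sem d ?N"
    using Seq.prems root_in[of d] by (auto simp: agreeD_def suffix_root)
  have ag: "agreeD g ?S" using Seq.prems hd by (auto simp: agreeD_def)
  have ad: "agreeD d S" using Seq.prems by (auto simp: agreeD_def)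
  have dg: "distinct (nodes g)" using Seq.prems by simp
  have dd: "distinct (nodes d)" using Seq.prems by simp
  have e: "- fml_sem (?S End) = game_sem d ?N" using hd by simp
  have "game_sem (dproj nl g ?S) (game_sem (dproj nl d S) Y)
     \<subseteq> game_sem g (game_sem (dproj nl d S) Y \<union> - fml_sem (?S End))"
    by (rule Seq.IH(1)[OF dg ag])
  also have "\<dots> \<subseteq> game_sem g (game_sem d (Y \<union> ?N))"
  proof (rule mono_gs)
    have "game_sem (dproj nl d S) Y \<subseteq> game_sem d (Y \<union> ?N)" by (rule Seq.IH(2)[OF dd ad])
    moreover have "game_sem d ?N \<subseteq> game_sem d (Y \<union> ?N)" by (rule mono_gs) blast
    ultimately show "game_sem (dproj nl d S) Y \<union> - fml_sem (?S End) \<subseteq> game_sem d (Y \<union> ?N)"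
      unfolding e by blast
  qed
  finally show ?case by simp
next
  case (Loop l g)
  let ?N = "- fml_sem (S End)"
  let ?S = "S(End := S (L l))"
  let ?W = "game_sem (Loop l g) ?N"
  have hW: "fml_sem (S (L l)) = - ?W" using Loop.prems by (auto simp: agreeD_def)
  have ag: "agreeD g ?S" using Loop.prems hW by (auto simp: agreeD_def)
  have IH: "\<And>Y. game_sem (dproj nl g ?S) Y \<subseteq> game_sem g (Y \<union> ?W)"
  proof -
    fix Y
    have e: "- fml_sem (?S End) = ?W" using hW by simp
    have dg: "distinct (nodes g)" using Loop.prems by simp
    show "game_sem (dproj nl g ?S) Y \<subseteq> game_sem g (Y \<union> ?W)"
      using Loop.IH[OF dg ag, of Y] unfolding e .
  qed
  define T where "T = lfp (\<lambda>Z. (Y \<union> ?N) \<union> game_sem g Z)"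
  have mT: "mono (\<lambda>Z. (Y \<union> ?N) \<union> game_sem g Z)" using mono_gs by (intro monoI) blast
  have Tunf: "T = (Y \<union> ?N) \<union> game_sem g T" unfolding T_def using lfp_unfold[OF mT] .
  have WT: "?W \<subseteq> T" unfolding T_def by simp (rule lfp_mono, blast)
  have "lfp (\<lambda>Z. Y \<union> game_sem (dproj nl g ?S) Z) \<subseteq> T"
  proof (rule lfp_lowerbound)
    have "game_sem (dproj nl g ?S) T \<subseteq> game_sem g (T \<union> ?W)" by (rule IH)
    also have "T \<union> ?W = T" using WT by blast
    finally show "Y \<union> game_sem (dproj nl g ?S) T \<subseteq> T" using Tunf by blast
  qed
  then show ?case by (simp add: T_def)
next
  case (DChoice l g d)
  let ?N = "- fml_sem (S End)"
  have ag: "agreeD g S" using DChoice.prems by (auto simp: agreeD_def)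
  have ad: "agreeD d S" using DChoice.prems by (auto simp: agreeD_def)
  have hg: "fml_sem (S (L (root g))) = - game_sem g ?N"
    using DChoice.prems root_in[of g] by (auto simp: agreeD_def suffix_root)
  have hd: "fml_sem (S (L (root d))) = - game_sem d ?N"
    using DChoice.prems root_in[of d] by (auto simp: agreeD_def suffix_root)
  have "game_sem g ?N \<subseteq> game_sem g (Y \<union> ?N)" by (rule mono_gs) auto
  moreover have "game_sem d ?N \<subseteq> game_sem d (Y \<union> ?N)" by (rule mono_gs) auto
  ultimately show ?case using DChoice.IH(1)[OF _ ag, of Y] DChoice.IH(2)[OF _ ad, of Y] DChoice.prems hg hd
    by auto
next
  case (DLoop l g)
  let ?N = "- fml_sem (S End)"
  let ?S = "S(End := Or (S (L (root g))) (S End))"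
  let ?W = "game_sem (DLoop l g) ?N"
  have mW: "mono (\<lambda>Z. ?N \<inter> game_sem g Z)" using mono_gs by (intro monoI) blast
  have Wunf: "?W = ?N \<inter> game_sem g ?W" using gfp_unfold[OF mW] by simp
  have hg: "fml_sem (S (L (root g))) = - game_sem g ?W"
    using DLoop.prems root_in[of g] by (auto simp: agreeD_def suffix_root)
  have e: "- fml_sem (?S End) = ?W" using hg Wunf by auto
  have ag: "agreeD g ?S" using DLoop.prems e by (auto simp: agreeD_def)
  have IH: "\<And>Y. game_sem (dproj nl g ?S) Y \<subseteq> game_sem g (Y \<union> ?W)"
  proof -
    fix Y
    have dg: "distinct (nodes g)" using DLoop.prems by simp
    show "game_sem (dproj nl g ?S) Y \<subseteq> game_sem g (Y \<union> ?W)"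
      using DLoop.IH[OF dg ag, of Y] unfolding e .
  qed
  define B where "B = Seq (nl l 1) (Assert (nl l 2) (S (L (root g)))) (dproj nl g ?S)"
  define G where "G = gfp (\<lambda>Z. (?N \<union> Y) \<inter> game_sem B Z)"
  define T where "T = gfp (\<lambda>Z. (Y \<union> ?N) \<inter> game_sem g Z)"
  have mG: "mono (\<lambda>Z. (?N \<union> Y) \<inter> game_sem B Z)" using mono_gs by (intro monoI) blast
  have Gunf: "G = (?N \<union> Y) \<inter> game_sem B G" unfolding G_def using gfp_unfold[OF mG] .
  have mT: "mono (\<lambda>Z. (Y \<union> ?N) \<inter> game_sem g Z)" using mono_gs by (intro monoI) blast
  have WT: "?W \<subseteq> T" unfolding T_def by simp (rule gfp_mono, blast)
  have "G \<subseteq> T" unfolding T_def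
  proof (rule coinduct[OF mT])
    have "game_sem g ?W \<subseteq> game_sem g (G \<union> T)" using WT by (intro mono_gs) blast
    moreover have "game_sem (dproj nl g ?S) G \<subseteq> game_sem g (G \<union> T)"
      using IH[of G] mono_gs[of "G \<union> ?W" "G \<union> T" g] WT by blast
    ultimately have "game_sem B G \<subseteq> game_sem g (G \<union> T)" using hg by (auto simp: B_def)
    then show "G \<subseteq> (Y \<union> ?N) \<inter> game_sem g (G \<union> gfp (\<lambda>Z. (Y \<union> ?N) \<inter> game_sem g Z))"
      using Gunf unfolding T_def by blast
  qed
  then show ?case by (simp add: G_def B_def T_def)
next
  case (AssignDemon l x) then show ?case by auto
next
  case (DODE l xs q) then show ?case by auto
qed (auto intro: mono_gs)

lemma validIff: "valid (Iff p q) \<longleftrightarrow> fml_sem p = fml_sem q"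
  by (auto simp: valid_def)

theorem mainTheorem6:
  fixes \<alpha> :: game and \<phi> :: fml and nl :: "lab \<Rightarrow> nat \<Rightarrow> lab"
  assumes unique_labels: "distinct (nodes \<alpha>)"
    and fresh_inj: "inj (\<lambda>(a, k). nl a k)"
    and fresh_new: "\<forall>a k. nl a k \<notin> set (nodes \<alpha>)"
  shows "valid (Iff (Dia (aproj nl \<alpha> (angel_mp \<alpha> \<phi>)) \<phi>) (Dia \<alpha> \<phi>))
       \<and> valid (Iff (Box (dproj nl \<alpha> (demon_mp \<alpha> \<phi>)) \<phi>) (Box \<alpha> \<phi>))"
proof
  have aA: "agreeA \<alpha> (angel_mp \<alpha> \<phi>)" by (simp add: agreeA_def)
  have aD: "agreeD \<alpha> (demon_mp \<alpha> \<phi>)" by (simp add: agreeD_def Box_def)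
  have "game_sem (aproj nl \<alpha> (angel_mp \<alpha> \<phi>)) (fml_sem \<phi>) = game_sem \<alpha> (fml_sem \<phi>)"
    using projB[of nl \<alpha> "angel_mp \<alpha> \<phi>" "fml_sem \<phi>"]
      projA[OF unique_labels aA, of "fml_sem \<phi>" nl] by simp
  then show "valid (Iff (Dia (aproj nl \<alpha> (angel_mp \<alpha> \<phi>)) \<phi>) (Dia \<alpha> \<phi>))"
    by (simp add: validIff)
  have "game_sem (dproj nl \<alpha> (demon_mp \<alpha> \<phi>)) (- fml_sem \<phi>) = game_sem \<alpha> (- fml_sem \<phi>)"
    using projBD[of \<alpha> "- fml_sem \<phi>" nl "demon_mp \<alpha> \<phi>"]
      projAD[OF unique_labels aD, of nl "- fml_sem \<phi>"] by simp
  then show "valid (Iff (Box (dproj nl \<alpha> (demon_mp \<alpha> \<phi>)) \<phi>) (Box \<alpha> \<phi>))"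
    by (simp add: validIff Box_def)
qed

end
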